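(* Let $C\ge0$ and $a>0$ be real numbers and let $f\in L^1(\mathbb{R})$ satisfy $|f(\xi)|\le Ce^{-a|\xi|}$ for all $\xi\in\mathbb{R}$. Then for all $\xi\in\mathbb{R}$, $$\left|\exp_2^*[f](\xi)\right|\le Ce^{-a|\xi|}\left(M\!\left(\frac{1+a|\xi|}{2},\,2,\,\frac{C}{\pi a}\right)-1\right),$$ where $M(\alpha,\beta,z)=\sum_{n\ge0}\frac{(\alpha)_n z^n}{(\beta)_n\,n!}$ is Kummer's confluent hypergeometric function and $(\alpha)_n=\alpha(\alpha+1)\cdots(\alpha+n-1)$.
   Context: Convolution is normalized: $f*h(\xi)=\frac1{2\pi}\int_{\mathbb{R}}f(\eta)h(\xi-\eta)\,d\eta$, and $f^{*m}$ is the $m$-fold convolution of $f$ with itself. $\exp_2^*[f]=\sum_{m\ge2}\frac{f^{*m}}{m!}$. *)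

theory Defs
  imports "HOL-Analysis.Analysis"
begin

definition conv :: "(real \<Rightarrow> complex) \<Rightarrow> (real \<Rightarrow> complex) \<Rightarrow> real \<Rightarrow> complex" where
  "conv f h \<xi> = complex_of_real (1 / (2 * pi)) * (LINT \<eta>|lborel. f \<eta> * h (\<xi> - \<eta>))"

fun convpow :: "(real \<Rightarrow> complex) \<Rightarrow> nat \<Rightarrow> real \<Rightarrow> complex" where
  "convpow f 0 = f"
| "convpow f (Suc 0) = f"
| "convpow f (Suc (Suc m)) = conv f (convpow f (Suc m))"

definition exp2conv :: "(real \<Rightarrow> complex) \<Rightarrow> real \<Rightarrow> complex" where
  "exp2conv f \<xi> = (\<Sum>k. convpow f (k + 2) \<xi> / of_nat (fact (k + 2)))"

definition kummerM :: "real \<Rightarrow> real \<Rightarrow> real \<Rightarrow> real" where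
  "kummerM \<alpha> \<beta> z = (\<Sum>n. pochhammer \<alpha> n * z ^ n / (pochhammer \<beta> n * fact n))"

end

theory Submission
  imports Defs
begin

fun th :: "nat \<Rightarrow> real \<Rightarrow> real" where
  "th 0 u = 1"
| "th (Suc 0) u = 1 + u"
| "th (Suc (Suc n)) u = (2 * real n + 3) * th (Suc n) u + u^2 * th n u"

fun dth :: "nat \<Rightarrow> real \<Rightarrow> real" where
  "dth 0 u = 0"
| "dth (Suc n) u = th (Suc n) u - u * th n u"

lemma dth_rec: "dth (Suc (Suc n)) u = (2 * real n + 3) * dth (Suc n) u + 2 * u * th n u + u^2 * dth n u"
proof (cases n)
  case 0 then show ?thesis by (simp add: power2_eq_square algebra_simps)
next
  case (Suc m) then show ?thesis by (simp add: power2_eq_square algebra_simps)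
qed

lemma th_deriv: "(th n has_real_derivative dth n u) (at u)"
proof (induction n u rule: th.induct)
  case (1 u) then show ?case by simp
next
  case (2 u) then show ?case by (auto intro!: derivative_eq_intros)
next
  case (3 n u)
  have "((\<lambda>u. (2 * real n + 3) * th (Suc n) u + u^2 * th n u) has_real_derivative
        (2 * real n + 3) * dth (Suc n) u + (2 * u * th n u + u^2 * dth n u)) (at u)"
    using 3 by (auto intro!: derivative_eq_intros simp: power2_eq_square)
  moreover have "th (Suc (Suc n)) = (\<lambda>u. (2 * real n + 3) * th (Suc n) u + u^2 * th n u)"
    by (rule ext) simp
  moreover have "dth (Suc (Suc n)) u = (2 * real n + 3) * dth (Suc n) u + (2 * u * th n u + u^2 * dth n u)"
    using dth_rec[of n u] by simp
  ultimately show ?case by simp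
qed

lemma th_dth_nonneg: "u \<ge> 0 \<Longrightarrow> 0 \<le> th n u \<and> 0 \<le> dth n u"
proof (induction n u rule: th.induct)
  case (3 n u)
  then show ?case
    by (simp only: dth_rec th.simps) (auto intro!: add_nonneg_nonneg mult_nonneg_nonneg)
qed auto

lemma th_nonneg: "u \<ge> 0 \<Longrightarrow> 0 \<le> th n u" using th_dth_nonneg by blast
lemma dth_nonneg: "u \<ge> 0 \<Longrightarrow> 0 \<le> dth n u" using th_dth_nonneg by blast

lemma th_le: assumes "u \<ge> 0" shows "th (Suc m) u \<le> (u + 2 * real m + 1) * th m u"
proof (cases m)
  case 0 then show ?thesis by simp
next
  case (Suc n)
  have "u * th n u \<le> th (Suc n) u" using dth_nonneg[OF assms, of "Suc n"] by simp
  then have "u * (u * th n u) \<le> u * th (Suc n) u" using assms by (rule mult_left_mono)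
  then show ?thesis using Suc by (simp add: power2_eq_square algebra_simps)
qed

lemma th_poch: assumes "u \<ge> 0" shows "th n u \<le> 2^n * pochhammer ((1+u)/2) n"
proof (induction n)
  case 0 then show ?case by simp
next
  case (Suc m)
  have "th (Suc m) u \<le> (u + 2 * real m + 1) * th m u" by (rule th_le[OF assms])
  also have "\<dots> \<le> (u + 2 * real m + 1) * (2^m * pochhammer ((1+u)/2) m)"
    using Suc assms by (intro mult_left_mono) auto
  also have "\<dots> = 2^Suc m * pochhammer ((1+u)/2) (Suc m)"
    by (simp add: pochhammer_Suc field_simps)
  finally show ?case .
qed

lemma key: "dth (Suc n) t + t * dth n t = (2 * real n + 1) * th n t"
  by (cases n) (simp_all add: power2_eq_square algebra_simps)

lemma antiA: "((\<lambda>t. (th (Suc n) t + t * th n t) / (2 * (real n + 1))) has_real_derivative th n t) (at t)"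
proof -
  have "((\<lambda>t. (th (Suc n) t + t * th n t) / (2 * (real n + 1))) has_real_derivative
     (dth (Suc n) t + (th n t + t * dth n t)) / (2 * (real n + 1))) (at t)"
    by (auto intro!: derivative_eq_intros th_deriv)
  moreover have "(dth (Suc n) t + (th n t + t * dth n t)) / (2 * (real n + 1)) = th n t"
    using key[of n t] by (simp add: field_simps)
  ultimately show ?thesis by simp
qed

lemma antiR: "((\<lambda>t. - exp (-2 * t) * dth (Suc n) t / (2 * (real n + 1))) has_real_derivative exp (-2*t) * th n t) (at t)"
proof -
  have e: "dth (Suc n) = (\<lambda>t. th (Suc n) t - t * th n t)" by (rule ext) simp
  have h1: "((\<lambda>t. exp(-2*t)) has_real_derivative exp(-2*t) * (-2)) (at t)"
    by (auto intro!: derivative_eq_intros)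
  have h2: "((\<lambda>t. th (Suc n) t - t * th n t) has_real_derivative dth (Suc n) t - (th n t + t * dth n t)) (at t)"
    by (auto intro!: derivative_eq_intros th_deriv)
  have h2': "(dth (Suc n) has_real_derivative dth (Suc n) t - (th n t + t * dth n t)) (at t)"
    using h2 e by simp
  note h3 = DERIV_cmult[OF DERIV_mult[OF h1 h2'], of "-1/(2*(real n+1))"]
  have f: "(\<lambda>t. - exp (-2 * t) * dth (Suc n) t / (2 * (real n + 1))) = (\<lambda>t. -1/(2*(real n+1)) * (exp(-2*t) * dth (Suc n) t))"
    by (rule ext) (simp add: field_simps)
  have D: "dth (Suc n) t = (2 * real n + 1) * th n t - t * dth n t" using key[of n t] by simp
  have v: "-1/(2*(real n+1)) * (exp(-2*t) * (-2) * dth (Suc n) t + (dth (Suc n) t - (th n t + t * dth n t)) * exp(-2*t)) = exp (-2*t) * th n t"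
    unfolding D by (simp add: field_simps)
  show ?thesis using h3 unfolding f v .
qed

lemma th_poly: assumes "t \<ge> 0" shows "th m t \<le> (t + 2 * real m + 1) ^ m"
proof (induction m)
  case 0 then show ?case by simp
next
  case (Suc m)
  have "th (Suc m) t \<le> (t + 2 * real m + 1) * th m t" by (rule th_le[OF assms])
  also have "\<dots> \<le> (t + 2 * real m + 1) * (t + 2 * real m + 1) ^ m"
    using Suc assms by (intro mult_left_mono) auto
  also have "\<dots> \<le> (t + 2 * real (Suc m) + 1) ^ Suc m"
  proof -
    have "(t + 2 * real m + 1) * (t + 2 * real m + 1) ^ m = (t + 2 * real m + 1) ^ Suc m" by simp
    also have "\<dots> \<le> (t + 2 * real (Suc m) + 1) ^ Suc m" using assms by (intro power_mono) auto
    finally show ?thesis .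
  qed
  finally show ?case .
qed

lemma lim_poly:
  fixes g :: "real \<Rightarrow> real"
  assumes "\<And>t. t \<ge> 0 \<Longrightarrow> 0 \<le> g t \<and> g t \<le> (t + K) ^ m" and "K \<ge> 0"
  shows "((\<lambda>t. exp (-2*t) * g t) \<longlongrightarrow> 0) at_top"
proof (rule tendsto_sandwich[where f="\<lambda>_. 0" and h="\<lambda>t. 2^m * (t^m / exp t)"])
  show "((\<lambda>t. 2^m * (t^m / exp t)) \<longlongrightarrow> (0::real)) at_top"
    using tendsto_mult[OF tendsto_const tendsto_power_div_exp_0, of "2^m" m] by simp
  show "\<forall>\<^sub>F t in at_top. 0 \<le> exp (-2*t) * g t"
    unfolding eventually_at_top_linorder using assms by (intro exI[of _ 0] allI impI mult_nonneg_nonneg) auto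
  show "\<forall>\<^sub>F t in at_top. exp (-2*t) * g t \<le> 2^m * (t^m / exp t)"
    unfolding eventually_at_top_linorder
  proof (intro exI[of _ K] allI impI)
    fix t assume t: "t \<ge> K"
    then have t0: "t \<ge> 0" using assms by linarith
    have "g t \<le> (t + K) ^ m" using assms t0 by blast
    also have "\<dots> \<le> (2 * t) ^ m" using t assms by (intro power_mono) auto
    finally have g: "g t \<le> 2^m * t^m" by (simp add: power_mult_distrib)
    have e1: "exp (-2*t) \<le> exp (-t)" using t0 by simp
    have e: "exp (-2*t) \<le> 1 / exp t" using e1 by (simp add: exp_minus divide_inverse)
    have "exp (-2*t) * g t \<le> (1 / exp t) * (2^m * t^m)"
      using g e assms t0 by (intro mult_mono) (auto intro!: mult_nonneg_nonneg)
    then show "exp (-2*t) * g t \<le> 2^m * (t^m / exp t)" by simp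
  qed
qed simp

lemma lim_dth: "((\<lambda>t. exp (-2*t) * dth (Suc n) t) \<longlongrightarrow> 0) at_top"
proof (rule lim_poly[where K="2 * real (Suc n) + 1" and m="Suc n"])
  fix t :: real assume t: "t \<ge> 0"
  have a1: "0 \<le> dth (Suc n) t" by (rule dth_nonneg[OF t])
  have a2: "dth (Suc n) t \<le> th (Suc n) t" using th_nonneg[OF t, of n] t by simp
  have a3: "th (Suc n) t \<le> (t + (2 * real (Suc n) + 1)) ^ Suc n"
    using th_poly[OF t, of "Suc n"] by (simp only: add.assoc)
  show "0 \<le> dth (Suc n) t \<and> dth (Suc n) t \<le> (t + (2 * real (Suc n) + 1)) ^ Suc n"
    using a1 order_trans[OF a2 a3] by blast
qed simp

lemma th_cont: "continuous_on UNIV (th n)"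
  using th_deriv by (intro continuous_at_imp_continuous_on) (auto intro: DERIV_isCont)

lemma th_meas[measurable]: "th n \<in> borel_measurable borel"
  using th_cont by (rule borel_measurable_continuous_onI)

lemma scale_deriv:
  assumes "\<And>t. (GG has_real_derivative gg t) (at t)" and "a \<noteq> 0"
  shows "((\<lambda>x. cK * GG (a * x) / a) has_real_derivative cK * gg (a * x)) (at x)"
proof -
  have r: "((\<lambda>x. GG (a * x)) has_real_derivative gg (a * x) * a) (at x)"
    by (rule DERIV_chain2[OF assms(1)]) (auto intro!: derivative_eq_intros)
  have "((\<lambda>x. cK * GG (a * x) / a) has_real_derivative cK * (gg (a * x) * a) / a) (at x)"
    by (intro DERIV_cdivide DERIV_cmult r)
  then show ?thesis using assms(2) by simp
qed

lemma tail:
  assumes a: "a > 0" and c: "c \<ge> 0" and K: "K \<ge> 0"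
  shows "(\<integral>\<^sup>+s. ennreal (K * (exp(-2*(a * s)) * th n (a * s))) * indicator {c..} s \<partial>lborel)
       = ennreal (K * (exp(-2*(a*c)) * dth (Suc n) (a*c)) / (2*(real n+1)*a))"
proof -
  define F where "F s = K * (- exp (-2 * (a * s)) * dth (Suc n) (a * s) / (2 * (real n + 1))) / a" for s
  have D: "DERIV F s :> K * (exp(-2*(a * s)) * th n (a * s))" for s
    unfolding F_def using scale_deriv[OF antiR, of a K n s] a by simp
  have lim0: "((\<lambda>s. exp (-2*(a * s)) * dth (Suc n) (a * s)) \<longlongrightarrow> 0) at_top"
    using filterlim_compose[OF lim_dth filterlim_tendsto_pos_mult_at_top[OF tendsto_const a filterlim_ident], of n]
    by (simp add: o_def)
  have "((\<lambda>s. (- K / (2 * (real n + 1) * a)) * (exp (-2*(a * s)) * dth (Suc n) (a * s))) \<longlongrightarrow> (- K / (2 * (real n + 1) * a)) * 0) at_top"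
    by (intro tendsto_mult tendsto_const lim0)
  moreover have "(\<lambda>s. (- K / (2 * (real n + 1) * a)) * (exp (-2*(a * s)) * dth (Suc n) (a * s))) = F"
    by (rule ext) (simp add: F_def field_simps del: dth.simps)
  ultimately have lim: "(F \<longlongrightarrow> 0) at_top" by simp
  have nn: "0 \<le> K * (exp(-2*(a * s)) * th n (a * s))" if "c \<le> s" for s
    using that c a K th_nonneg[of "a * s" n] by (intro mult_nonneg_nonneg) auto
  have "(\<integral>\<^sup>+s. ennreal (K * (exp(-2*(a * s)) * th n (a * s))) * indicator {c..} s \<partial>lborel) = ennreal (0 - F c)"
    by (rule nn_integral_FTC_atLeast[OF _ D nn lim]) measurable
  also have "0 - F c = K * (exp(-2*(a*c)) * dth (Suc n) (a*c)) / (2*(real n+1)*a)"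
    unfolding F_def using a by (simp add: field_simps del: dth.simps)
  finally show ?thesis .
qed

lemma core_pos:
  assumes a: "a > 0" and x: "x \<ge> 0"
  shows "(\<integral>\<^sup>+s. ennreal (exp (-a * \<bar>x - s\<bar>) * exp (-a * \<bar>s\<bar>) * th n (a * \<bar>s\<bar>)) \<partial>lborel)
    \<le> ennreal (exp (-a * x) * th (Suc n) (a * x) / ((real n + 1) * a))"
proof -
  define W where "W s = exp (-a * \<bar>x - s\<bar>) * exp (-a * \<bar>s\<bar>) * th n (a * \<bar>s\<bar>)" for s
  define g1 where "g1 s = exp (a * x) * (exp (-2 * (a * s)) * th n (a * s))" for s
  define g2 where "g2 s = exp (-a * x) * th n (a * s)" for s
  define g3 where "g3 s = exp (-a * x) * (exp (-2 * (a * s)) * th n (a * s))" for s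
  have Wm[measurable]: "W \<in> borel_measurable borel" unfolding W_def by measurable
  have g1m[measurable]: "g1 \<in> borel_measurable borel" unfolding g1_def by measurable
  have g2m[measurable]: "g2 \<in> borel_measurable borel" unfolding g2_def by measurable
  have pw: "ennreal (W s) \<le> (ennreal (g1 s) * indicator {x..} s + ennreal (g2 s) * indicator {0..x} s) + ennreal (W s) * indicator {..0} s" for s
  proof (cases "s \<ge> x")
    case True
    then have "W s = exp (-a * (s - x)) * exp (-a * s) * th n (a * s)" using x by (simp add: W_def)
    also have "exp (-a * (s - x)) * exp (-a * s) = exp (a * x) * exp (-2 * (a * s))"
      by (simp add: mult_exp_exp algebra_simps)
    finally have "W s = g1 s" by (simp add: g1_def)
    then show ?thesis using True by (simp add: add_increasing2)
  next
    case False
    show ?thesis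
    proof (cases "s \<ge> 0")
      case True
      then have "W s = exp (-a * (x - s)) * exp (-a * s) * th n (a * s)" using False by (simp add: W_def)
      also have "exp (-a * (x - s)) * exp (-a * s) = exp (-a * x)"
        by (simp add: mult_exp_exp algebra_simps)
      finally have "W s = g2 s" by (simp add: g2_def)
      then show ?thesis using True False by (simp add: add_increasing2)
    next
      case False
      then show ?thesis by simp
    qed
  qed
  have "(\<integral>\<^sup>+s. ennreal (W s) \<partial>lborel) \<le> (\<integral>\<^sup>+s. (ennreal (g1 s) * indicator {x..} s + ennreal (g2 s) * indicator {0..x} s) + ennreal (W s) * indicator {..0} s \<partial>lborel)"
    by (rule nn_integral_mono) (rule pw)
  also have "\<dots> = (\<integral>\<^sup>+s. ennreal (g1 s) * indicator {x..} s \<partial>lborel) + (\<integral>\<^sup>+s. ennreal (g2 s) * indicator {0..x} s \<partial>lborel) + (\<integral>\<^sup>+s. ennreal (W s) * indicator {..0} s \<partial>lborel)"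
  proof -
    have m1: "(\<lambda>s. ennreal (g1 s) * indicator {x..} s) \<in> borel_measurable lborel" by measurable
    have m2: "(\<lambda>s. ennreal (g2 s) * indicator {0..x} s) \<in> borel_measurable lborel" by measurable
    have m3: "(\<lambda>s. ennreal (W s) * indicator {..0} s) \<in> borel_measurable lborel" by measurable
    have m12: "(\<lambda>s. ennreal (g1 s) * indicator {x..} s + ennreal (g2 s) * indicator {0..x} s) \<in> borel_measurable lborel"
      using m1 m2 by (rule borel_measurable_add)
    show ?thesis using nn_integral_add[OF m12 m3] nn_integral_add[OF m1 m2] by simp
  qed
  finally have step1: "(\<integral>\<^sup>+s. ennreal (W s) \<partial>lborel) \<le> (\<integral>\<^sup>+s. ennreal (g1 s) * indicator {x..} s \<partial>lborel) + (\<integral>\<^sup>+s. ennreal (g2 s) * indicator {0..x} s \<partial>lborel) + (\<integral>\<^sup>+s. ennreal (W s) * indicator {..0} s \<partial>lborel)" .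
  define v1 where "v1 = exp (a * x) * (exp (-2 * (a * x)) * dth (Suc n) (a * x)) / (2 * (real n + 1) * a)"
  define v3 where "v3 = exp (-a * x) * (exp (-2 * (a * 0)) * dth (Suc n) (a * 0)) / (2 * (real n + 1) * a)"
  define F2 where "F2 s = exp (-a * x) * ((th (Suc n) (a * s) + (a * s) * th n (a * s)) / (2 * (real n + 1))) / a" for s
  have i1: "(\<integral>\<^sup>+s. ennreal (g1 s) * indicator {x..} s \<partial>lborel) = ennreal v1"
    unfolding g1_def v1_def by (rule tail[OF a x]) simp
  have D2: "DERIV F2 s :> g2 s" for s
    unfolding F2_def g2_def using scale_deriv[OF antiA, of a "exp (-a * x)" n s] a by simp
  have i2: "(\<integral>\<^sup>+s. ennreal (g2 s) * indicator {0..x} s \<partial>lborel) = ennreal (F2 x - F2 0)"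
    by (rule nn_integral_FTC_Icc[OF g2m D2]) (use x a in \<open>auto simp: g2_def intro!: th_nonneg mult_nonneg_nonneg\<close>)
  have m3b: "(\<lambda>s. ennreal (W s) * indicator {..0} s) \<in> borel_measurable borel" by measurable
  have "(\<integral>\<^sup>+s. ennreal (W s) * indicator {..0} s \<partial>lborel) = ennreal \<bar>-1\<bar> * (\<integral>\<^sup>+s. ennreal (W (0 + -1 * s)) * indicator {..0} (0 + -1 * s) \<partial>lborel)"
    using nn_integral_real_affine[OF m3b, of "-1" 0] by simp
  also have "\<dots> = (\<integral>\<^sup>+s. ennreal (g3 s) * indicator {0..} s \<partial>lborel)"
  proof -
    have "ennreal (W (0 + -1 * s)) * indicator {..0} (0 + -1 * s) = ennreal (g3 s) * indicator {0..} s" for s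
    proof (cases "s \<ge> 0")
      case True
      then have "W (0 + -1 * s) = exp (-a * (x + s)) * exp (-a * s) * th n (a * s)" using x by (simp add: W_def)
      also have "exp (-a * (x + s)) * exp (-a * s) = exp (-a * x) * exp (-2 * (a * s))"
        by (simp add: mult_exp_exp algebra_simps)
      finally show ?thesis using True by (simp add: g3_def mult.assoc)
    qed simp
    then show ?thesis by simp
  qed
  also have "\<dots> = ennreal v3"
    unfolding g3_def v3_def by (rule tail[OF a order_refl]) simp
  finally have i3: "(\<integral>\<^sup>+s. ennreal (W s) * indicator {..0} s \<partial>lborel) = ennreal v3" .
  have u0: "a * x \<ge> 0" using a x by simp
  have d1: "0 \<le> dth (Suc n) (a * x)" by (rule dth_nonneg[OF u0])
  have d3: "0 \<le> dth (Suc n) (a * 0)" by (rule dth_nonneg) simp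
  have v1nn: "v1 \<ge> 0" unfolding v1_def using a d1
    by (intro divide_nonneg_nonneg mult_nonneg_nonneg) (auto simp del: dth.simps)
  have v3nn: "v3 \<ge> 0" unfolding v3_def using a d3
    by (intro divide_nonneg_nonneg mult_nonneg_nonneg) (auto simp del: dth.simps)
  have mono: "th (Suc n) 0 \<le> th (Suc n) (a * x)"
    by (rule DERIV_nonneg_imp_nondecreasing[OF u0]) (use th_deriv dth_nonneg in blast)
  have v2nn: "F2 x - F2 0 \<ge> 0"
  proof -
    have "a * x * th n (a * x) \<ge> 0" using u0 th_nonneg[OF u0, of n] by simp
    then have q: "th (Suc n) (a * 0) + (a * 0) * th n (a * 0) \<le> th (Suc n) (a * x) + (a * x) * th n (a * x)"
      using mono by simp
    have "F2 0 \<le> F2 x" unfolding F2_def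
      by (intro divide_right_mono mult_left_mono q) (use a in auto)
    then show ?thesis by simp
  qed
  have "ennreal v1 + ennreal (F2 x - F2 0) + ennreal v3 = ennreal (v1 + (F2 x - F2 0) + v3)"
    using v1nn v2nn v3nn by (simp add: ennreal_plus)
  also have "v1 + (F2 x - F2 0) + v3 = exp (-a * x) * th (Suc n) (a * x) / ((real n + 1) * a)"
  proof -
    have e: "exp (a * x) * exp (-2 * (a * x)) = exp (-a * x)" by (simp add: mult_exp_exp)
    have v1': "v1 = (exp (a * x) * exp (-2 * (a * x))) * dth (Suc n) (a * x) / (2 * (real n + 1) * a)"
      unfolding v1_def by (simp only: mult.assoc)
    define E P Q Z N where "E = exp (-a * x)" and "P = th (Suc n) (a * x)" and "Q = a * x * th n (a * x)"
      and "Z = th (Suc n) 0" and "N = real n + 1"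
    have N0: "N \<noteq> 0" unfolding N_def by simp
    have a0: "a \<noteq> 0" using a by simp
    have e1: "v1 = E * (P - Q) / (2 * N * a)" using v1' unfolding e by (simp add: E_def P_def Q_def N_def)
    have e2: "F2 x - F2 0 = E * ((P + Q) / (2 * N)) / a - E * (Z / (2 * N)) / a"
      by (simp add: F2_def E_def P_def Q_def Z_def N_def)
    have e3: "v3 = E * Z / (2 * N * a)" by (simp add: v3_def E_def Z_def N_def)
    have "v1 + (F2 x - F2 0) + v3 = E * P / (N * a)"
      unfolding e1 e2 e3 using N0 a0 by (simp add: field_simps)
    then show ?thesis by (simp add: E_def P_def N_def)
  qed
  finally show ?thesis using step1 i1 i2 i3 unfolding W_def by simp
qed

lemma core:
  assumes a: "a > 0"
  shows "(\<integral>\<^sup>+y. ennreal (exp (-a * \<bar>y\<bar>) * (exp (-a * \<bar>x - y\<bar>) * th n (a * \<bar>x - y\<bar>))) \<partial>lborel)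
    \<le> ennreal (exp (-a * \<bar>x\<bar>) * th (Suc n) (a * \<bar>x\<bar>) / ((real n + 1) * a))"
proof -
  define H where "H z s = ennreal (exp (-a * \<bar>z - s\<bar>) * exp (-a * \<bar>s\<bar>) * th n (a * \<bar>s\<bar>))" for z s
  have Hm: "H z \<in> borel_measurable borel" for z unfolding H_def by measurable
  have Gm: "(\<lambda>y. ennreal (exp (-a * \<bar>y\<bar>) * (exp (-a * \<bar>x - y\<bar>) * th n (a * \<bar>x - y\<bar>)))) \<in> borel_measurable borel"
    by measurable
  have "(\<integral>\<^sup>+y. ennreal (exp (-a * \<bar>y\<bar>) * (exp (-a * \<bar>x - y\<bar>) * th n (a * \<bar>x - y\<bar>))) \<partial>lborel)
     = ennreal \<bar>-1\<bar> * (\<integral>\<^sup>+s. ennreal (exp (-a * \<bar>x + -1 * s\<bar>) * (exp (-a * \<bar>x - (x + -1 * s)\<bar>) * th n (a * \<bar>x - (x + -1 * s)\<bar>))) \<partial>lborel)"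
    using nn_integral_real_affine[OF Gm, of "-1" x] by simp
  also have "\<dots> = (\<integral>\<^sup>+s. H x s \<partial>lborel)"
    by (simp add: H_def mult_ac)
  also have "\<dots> = (\<integral>\<^sup>+s. H \<bar>x\<bar> s \<partial>lborel)"
  proof (cases "x \<ge> 0")
    case False
    have "(\<integral>\<^sup>+s. H x s \<partial>lborel) = ennreal \<bar>-1\<bar> * (\<integral>\<^sup>+s. H x (0 + -1 * s) \<partial>lborel)"
      using nn_integral_real_affine[OF Hm, of "-1" x 0] by simp
    also have "\<dots> = (\<integral>\<^sup>+s. H \<bar>x\<bar> s \<partial>lborel)"
    proof -
      have "H x (0 + -1 * s) = H \<bar>x\<bar> s" for s
        using False unfolding H_def by (simp add: abs_minus_commute) (smt (verit))
      then show ?thesis by simp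
    qed
    finally show ?thesis .
  qed simp
  also have "\<dots> \<le> ennreal (exp (-a * \<bar>x\<bar>) * th (Suc n) (a * \<bar>x\<bar>) / ((real n + 1) * a))"
    unfolding H_def by (rule core_pos[OF a]) simp
  finally show ?thesis .
qed

lemma conv_step:
  fixes f h :: "real \<Rightarrow> complex"
  assumes a: "a > 0" and C: "C \<ge> 0" and K: "K \<ge> 0"
    and hf: "\<And>y. norm (f y) \<le> C * exp (-a * \<bar>y\<bar>)"
    and hh: "\<And>y. norm (h y) \<le> K * (exp (-a * \<bar>y\<bar>) * th n (a * \<bar>y\<bar>))"
  shows "norm (conv f h x) \<le> C * K * (exp (-a * \<bar>x\<bar>) * th (Suc n) (a * \<bar>x\<bar>)) / (2 * pi * (real n + 1) * a)"
proof -
  define G where "G y = exp (-a * \<bar>y\<bar>) * (exp (-a * \<bar>x - y\<bar>) * th n (a * \<bar>x - y\<bar>))" for y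
  define V where "V = exp (-a * \<bar>x\<bar>) * th (Suc n) (a * \<bar>x\<bar>) / ((real n + 1) * a)"
  have Gm: "G \<in> borel_measurable lborel" unfolding G_def by measurable
  have Gnn: "0 \<le> G y" for y unfolding G_def using a th_nonneg[of "a * \<bar>x - y\<bar>" n] by simp
  have V0: "0 \<le> V" unfolding V_def using a th_nonneg[of "a * \<bar>x\<bar>" "Suc n"] by simp
  have nnG: "(\<integral>\<^sup>+y. ennreal (G y) \<partial>lborel) \<le> ennreal V"
    unfolding G_def V_def by (rule core[OF a])
  have Gi: "integrable lborel G"
    by (rule integrableI_nonneg[OF Gm]) (use Gnn nnG in \<open>auto simp: order_le_less_trans\<close>)
  have GV: "integral\<^sup>L lborel G \<le> V"
    by (subst integral_eq_nn_integral[OF Gm]) (use Gnn nnG V0 in \<open>auto intro!: enn2real_leI\<close>)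
  define F where "F y = f y * h (x - y)" for y
  have Fb: "norm (F y) \<le> C * K * G y" for y
  proof -
    have "norm (F y) = norm (f y) * norm (h (x - y))" by (simp add: F_def norm_mult)
    also have "\<dots> \<le> (C * exp (-a * \<bar>y\<bar>)) * (K * (exp (-a * \<bar>x - y\<bar>) * th n (a * \<bar>x - y\<bar>)))"
      by (intro mult_mono hf hh) (use C in auto)
    also have "\<dots> = C * K * G y" by (simp add: G_def)
    finally show ?thesis .
  qed
  have IF: "norm (integral\<^sup>L lborel F) \<le> C * K * V"
  proof -
    have "norm (integral\<^sup>L lborel F) \<le> (\<integral>y. norm (F y) \<partial>lborel)" by (rule integral_norm_bound)
    also have "\<dots> \<le> C * K * V"
    proof (cases "integrable lborel (\<lambda>y. norm (F y))")
      case True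
      have "(\<integral>y. norm (F y) \<partial>lborel) \<le> (\<integral>y. C * K * G y \<partial>lborel)"
        by (rule integral_mono[OF True]) (use Gi Fb in auto)
      also have "\<dots> = C * K * integral\<^sup>L lborel G" by simp
      also have "\<dots> \<le> C * K * V" using GV C K by (intro mult_left_mono) auto
      finally show ?thesis .
    next
      case False
      then show ?thesis using C K V0 by (simp add: not_integrable_integral_eq)
    qed
    finally show ?thesis .
  qed
  have "norm (conv f h x) = (1 / (2 * pi)) * norm (integral\<^sup>L lborel F)"
    unfolding conv_def F_def by (simp add: norm_mult norm_divide)
  also have "\<dots> \<le> (1 / (2 * pi)) * (C * K * V)" using IF by (intro mult_left_mono) auto
  also have "\<dots> = C * K * (exp (-a * \<bar>x\<bar>) * th (Suc n) (a * \<bar>x\<bar>)) / (2 * pi * (real n + 1) * a)"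
    unfolding V_def by (simp add: field_simps)
  finally show ?thesis .
qed

lemma convpow_bound:
  fixes f :: "real \<Rightarrow> complex"
  assumes a: "a > 0" and C: "C \<ge> 0" and hf: "\<And>y. norm (f y) \<le> C * exp (-a * \<bar>y\<bar>)"
  shows "norm (convpow f (Suc n) x) \<le> C ^ Suc n / (fact n * (2 * pi * a) ^ n) * (exp (-a * \<bar>x\<bar>) * th n (a * \<bar>x\<bar>))"
proof (induction n arbitrary: x)
  case 0 then show ?case using hf by simp
next
  case (Suc n)
  define K where "K = C ^ Suc n / (fact n * (2 * pi * a) ^ n)"
  have K0: "K \<ge> 0" unfolding K_def using C a by simp
  have "norm (convpow f (Suc (Suc n)) x) = norm (conv f (convpow f (Suc n)) x)" by simp
  also have "\<dots> \<le> C * K * (exp (-a * \<bar>x\<bar>) * th (Suc n) (a * \<bar>x\<bar>)) / (2 * pi * (real n + 1) * a)"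
    by (rule conv_step[OF a C K0 hf]) (use Suc in \<open>simp add: K_def\<close>)
  also have "\<dots> = C ^ Suc (Suc n) / (fact (Suc n) * (2 * pi * a) ^ Suc n) * (exp (-a * \<bar>x\<bar>) * th (Suc n) (a * \<bar>x\<bar>))"
    unfolding K_def using a by (simp add: field_simps)
  finally show ?case .
qed

lemma poch2: "pochhammer (2::real) m = fact (Suc m)"
  using pochhammer_rec[of "1::real" m] pochhammer_fact[of "Suc m", where 'a=real] by simp

lemma nf: "cmod (fact m :: complex) = fact m" by (metis norm_of_nat of_nat_fact)

lemma alg2:
  fixes C E P Q F D :: real
  shows "F \<noteq> 0 \<Longrightarrow> Q \<noteq> 0 \<Longrightarrow> D \<noteq> 0 \<Longrightarrow>
    C ^ Suc (Suc k) / (F * (D * Q ^ Suc k)) * (E * (D * P)) = C * E * (P * (C / Q) ^ Suc k / F)"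
  by (simp add: field_simps power_divide)

lemma term_bound:
  fixes f :: "real \<Rightarrow> complex"
  assumes a: "a > 0" and C: "C \<ge> 0" and hf: "\<And>y. norm (f y) \<le> C * exp (-a * \<bar>y\<bar>)"
  shows "norm (convpow f (k + 2) x / of_nat (fact (k + 2))) \<le> C * exp (-a * \<bar>x\<bar>) *
     (pochhammer ((1 + a * \<bar>x\<bar>) / 2) (Suc k) * (C / (pi * a)) ^ Suc k / (pochhammer 2 (Suc k) * fact (Suc k)))"
proof -
  define X where "X = (1 + a * \<bar>x\<bar>) / 2"
  define E where "E = exp (-a * \<bar>x\<bar>)"
  have u0: "a * \<bar>x\<bar> \<ge> 0" using a by simp
  have E0: "E \<ge> 0" unfolding E_def by simp
  have "norm (convpow f (Suc (Suc k)) x) \<le> C ^ Suc (Suc k) / (fact (Suc k) * (2 * pi * a) ^ Suc k) * (E * th (Suc k) (a * \<bar>x\<bar>))"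
    unfolding E_def by (rule convpow_bound[OF a C hf])
  also have "\<dots> \<le> C ^ Suc (Suc k) / (fact (Suc k) * (2 * pi * a) ^ Suc k) * (E * (2 ^ Suc k * pochhammer X (Suc k)))"
    unfolding X_def using th_poch[OF u0, of "Suc k"] C a E0 by (intro mult_left_mono) auto
  also have "\<dots> = C * E * (pochhammer X (Suc k) * (C / (pi * a)) ^ Suc k / fact (Suc k))"
  proof -
    have pw: "(2 * pi * a) ^ Suc k = 2 ^ Suc k * (pi * a) ^ Suc k"
      by (simp only: power_mult_distrib[symmetric] mult.assoc)
    show ?thesis unfolding pw
      by (rule alg2) (use a in auto)
  qed
  finally have b: "norm (convpow f (Suc (Suc k)) x) \<le> C * E * (pochhammer X (Suc k) * (C / (pi * a)) ^ Suc k / fact (Suc k))" .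
  have "norm (convpow f (k + 2) x / of_nat (fact (k + 2))) = norm (convpow f (Suc (Suc k)) x) / fact (Suc (Suc k))"
    by (simp only: norm_divide norm_of_nat add_2_eq_Suc' of_nat_fact nf)
  also have "\<dots> \<le> C * E * (pochhammer X (Suc k) * (C / (pi * a)) ^ Suc k / fact (Suc k)) / fact (Suc (Suc k))"
    by (rule divide_right_mono[OF b]) simp
  also have "\<dots> = C * E * (pochhammer X (Suc k) * (C / (pi * a)) ^ Suc k / (pochhammer 2 (Suc k) * fact (Suc k)))"
    by (simp add: poch2)
  finally show ?thesis unfolding X_def E_def .
qed

lemma kummer_summable:
  fixes X z :: real
  assumes X: "X > 0" and z: "z \<ge> 0"
  shows "summable (\<lambda>m. pochhammer X m * z ^ m / (pochhammer 2 m * fact m))"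
proof (rule summable_ratio_test[where c="1/2" and N="nat \<lceil>X + 4 * z\<rceil>"])
  fix m assume m: "m \<ge> nat \<lceil>X + 4 * z\<rceil>"
  define T where "T m = pochhammer X m * z ^ m / (pochhammer 2 m * fact m)" for m
  have T0: "T j \<ge> 0" for j unfolding T_def using X z by (simp add: pochhammer_pos less_imp_le)
  have p2: "pochhammer (2::real) j > 0" for j by (simp add: pochhammer_pos)
  have TS: "T (Suc m) = T m * ((X + real m) * z / ((2 + real m) * (real m + 1)))"
    unfolding T_def using p2[of m] by (simp add: pochhammer_rec' field_simps)
  have rm: "real m \<ge> X + 4 * z" using m by linarith
  have r1: "(X + real m) * z \<le> 2 * real m * z" using rm z X by (intro mult_right_mono) auto
  have r2: "4 * z * real m \<le> real m * real m" using rm z X by (intro mult_right_mono) auto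
  have r3: "2 * ((X + real m) * z) \<le> (2 + real m) * (real m + 1)"
    using r1 r2 by (simp add: algebra_simps)
  have r: "(X + real m) * z / ((2 + real m) * (real m + 1)) \<le> 1/2"
  proof -
    have bpos: "(2 + real m) * (real m + 1) > 0" by simp
    show ?thesis using r3 by (simp add: pos_divide_le_eq[OF bpos])
  qed
  have "T (Suc m) \<le> T m * (1/2)" unfolding TS using T0[of m] r by (intro mult_left_mono) auto
  then show "norm (T (Suc m)) \<le> 1/2 * norm (T m)" using T0 by simp
qed simp


theorem mainTheorem8:
  fixes f :: "real \<Rightarrow> complex" and C a :: real
  assumes "C \<ge> 0" and "a > 0"
    and "integrable lborel f"
    and "\<And>\<xi>. norm (f \<xi>) \<le> C * exp (- a * \<bar>\<xi>\<bar>)"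
  shows "\<forall>\<xi>::real. norm (exp2conv f \<xi>)
           \<le> C * exp (- a * \<bar>\<xi>\<bar>) * (kummerM ((1 + a * \<bar>\<xi>\<bar>) / 2) 2 (C / (pi * a)) - 1)"
proof (intro allI)
  fix x :: real
  have C: "C \<ge> 0" and a: "a > 0" using assms by auto
  have hf: "\<And>y. norm (f y) \<le> C * exp (-a * \<bar>y\<bar>)" using assms(4) by simp
  define X where "X = (1 + a * \<bar>x\<bar>) / 2"
  define z where "z = C / (pi * a)"
  define T where "T m = pochhammer X m * z ^ m / (pochhammer 2 m * fact m)" for m
  define t where "t k = convpow f (k + 2) x / of_nat (fact (k + 2))" for k
  define E where "E = exp (-a * \<bar>x\<bar>)"
  have X0: "X > 0" unfolding X_def using a by (simp add: add_pos_nonneg)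
  have z0: "z \<ge> 0" unfolding z_def using a C by simp
  have sT: "summable T" unfolding T_def by (rule kummer_summable[OF X0 z0])
  have sT1: "summable (\<lambda>k. T (Suc k))" using sT by (simp add: summable_Suc_iff)
  have sB: "summable (\<lambda>k. C * E * T (Suc k))" by (rule summable_mult[OF sT1])
  have tb: "norm (t k) \<le> C * E * T (Suc k)" for k
    unfolding t_def T_def E_def X_def z_def by (rule term_bound[OF a C hf])
  have sn: "summable (\<lambda>k. norm (t k))"
    by (rule summable_comparison_test[OF _ sB]) (use tb in auto)
  have "norm (exp2conv f x) = norm (suminf t)" unfolding exp2conv_def t_def by (rule refl)
  also have "\<dots> \<le> (\<Sum>k. norm (t k))" by (rule summable_norm[OF sn])
  also have "\<dots> \<le> (\<Sum>k. C * E * T (Suc k))" by (rule suminf_le[OF tb sn sB])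
  also have "\<dots> = C * E * (\<Sum>k. T (Suc k))" by (rule suminf_mult[OF sT1])
  also have "\<dots> = C * E * (suminf T - T 0)" by (simp add: suminf_split_head[OF sT])
  also have "\<dots> = C * E * (kummerM X 2 z - 1)" by (simp add: kummerM_def T_def[abs_def])
  finally show "norm (exp2conv f x) \<le> C * exp (- a * \<bar>x\<bar>) * (kummerM ((1 + a * \<bar>x\<bar>) / 2) 2 (C / (pi * a)) - 1)"
    by (simp add: E_def X_def z_def)
qed

end
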